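(* Let $(X,\Sigma)$ be a measurable space and let $\mathscr{A}=\{\mathsf{A}_t(\cdot|E)\colon E\in\Sigma,\,t\ge0\}$ be a parametric family of conditional aggregation operators (with paving $\Sigma$ for every $t$). If $\inf_{x\in E}f(x)\le\mathsf{A}_t(f|E)$ for every $f\in\mathbf{F}$, every $t>0$ and every $E\in\Sigma\setminus\{\emptyset\}$, then $\mu_t(\{x\in X\colon f(x)\ge t\})\le\boldsymbol{\mu}_{\mathscr{A}}(f,t)$ for every $t>0$, every $f\in\mathbf{F}\setminus\{0_X\}$ and every family $\boldsymbol{\mu}=(\mu_t)_{t\ge0}$ of monotone measures on $\Sigma$.
   Context: $0_X$ is the zero function on $X$. $\Sigma^0=\Sigma\setminus\{\emptyset\}$. $\mathbf{F}$ denotes the set of all $\Sigma$-measurable, nonnegative, bounded functions $f\colon X\to[0,\infty)$. A monotone measure is a map $\mu\colon\Sigma\to[0,\infty]$ with $\mu(B)\le\mu(C)$ whenever $B\subseteq C$, $\mu(\emptyset)=0$ and $\mu(X)>0$. For $E\in\Sigma^0$, a conditional aggregation operator (CAO) w.r.t. $E$ is a map $\mathsf{A}(\cdot|E)\colon\mathbf{F}\to[0,\infty]$ such that (C1) $\mathsf{A}(f|E)\le\mathsf{A}(g|E)$ whenever $f(x)\le g(x)$ for all $x\in E$, and (C2) $\mathsf{A}(\mathbf{1}_{X\setminus E}|E)=0$. Here $\mathsf{A}_t(\cdot|E)$ is a CAO w.r.t. $E$ for each $t\ge0$ and $E\in\Sigma^0$, and $\mathsf{A}_t(\cdot|\emptyset)=\infty$.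 The generalized level measure is $\boldsymbol{\mu}_{\mathscr{A}}(f,t)=\sup\{\mu_t(E)\colon \mathsf{A}_t(f|E)\ge t,\ E\in\Sigma\}$ for $t\ge0$. *)

theory Defs
  imports "HOL-Analysis.Analysis"
begin

definition bnn_funs :: "'a measure \<Rightarrow> ('a \<Rightarrow> real) set" where
  "bnn_funs M = {f. f \<in> borel_measurable M \<and> (\<forall>x\<in>space M. 0 \<le> f x)
                  \<and> (\<exists>c. \<forall>x\<in>space M. f x \<le> c)}"

definition monotone_measure :: "'a measure \<Rightarrow> ('a set \<Rightarrow> ennreal) \<Rightarrow> bool" where
  "monotone_measure M \<mu> \<longleftrightarrow>
     (\<forall>B\<in>sets M. \<forall>C\<in>sets M. B \<subseteq> C \<longrightarrow> \<mu> B \<le> \<mu> C) \<and> \<mu> {} = 0 \<and> \<mu> (space M) > 0"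

definition is_CAO :: "'a measure \<Rightarrow> 'a set \<Rightarrow> (('a \<Rightarrow> real) \<Rightarrow> ennreal) \<Rightarrow> bool" where
  "is_CAO M E Ag \<longleftrightarrow>
     (\<forall>f\<in>bnn_funs M. \<forall>g\<in>bnn_funs M. (\<forall>x\<in>E. f x \<le> g x) \<longrightarrow> Ag f \<le> Ag g) \<and>
     Ag (indicator (space M - E)) = 0"

text \<open>Parametric family of CAOs: A t E is the operator A_t(.|E); A_t(.|{}) = infinity.\<close>
definition is_param_CAO_family ::
  "'a measure \<Rightarrow> (real \<Rightarrow> 'a set \<Rightarrow> ('a \<Rightarrow> real) \<Rightarrow> ennreal) \<Rightarrow> bool" where
  "is_param_CAO_family M A \<longleftrightarrow>
     (\<forall>t\<ge>0. (\<forall>E\<in>sets M - {{}}. is_CAO M E (A t E)) \<and>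
             (\<forall>f\<in>bnn_funs M. A t {} f = \<infinity>))"

definition gen_level_measure ::
  "'a measure \<Rightarrow> (real \<Rightarrow> 'a set \<Rightarrow> ennreal) \<Rightarrow> (real \<Rightarrow> 'a set \<Rightarrow> ('a \<Rightarrow> real) \<Rightarrow> ennreal)
     \<Rightarrow> ('a \<Rightarrow> real) \<Rightarrow> real \<Rightarrow> ennreal" where
  "gen_level_measure M \<mu> A f t = (SUP E\<in>{E\<in>sets M. A t E f \<ge> ennreal t}. \<mu> t E)"

end

theory Submission
  imports Defs
begin

theorem proposition3p17:
  fixes M :: "'a measure"
    and A :: "real \<Rightarrow> 'a set \<Rightarrow> ('a \<Rightarrow> real) \<Rightarrow> ennreal"
  assumes fam: "is_param_CAO_family M A"
    and inf_le: "\<And>f t E. f \<in> bnn_funs M \<Longrightarrow> t > 0 \<Longrightarrow> E \<in> sets M \<Longrightarrow> E \<noteq> {} \<Longrightarrow>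
                   ennreal (INF x\<in>E. f x) \<le> A t E f"
  shows "\<forall>t>0. \<forall>f\<in>bnn_funs M. (\<exists>x\<in>space M. f x \<noteq> 0) \<longrightarrow>
           (\<forall>\<mu> :: real \<Rightarrow> 'a set \<Rightarrow> ennreal. (\<forall>s\<ge>0. monotone_measure M (\<mu> s)) \<longrightarrow>
              \<mu> t {x\<in>space M. f x \<ge> t} \<le> gen_level_measure M \<mu> A f t)"
proof (intro allI impI ballI)
  fix t :: real and f \<mu>
  assume t: "t > 0" and f: "f \<in> bnn_funs M"
  define E where "E = {x\<in>space M. f x \<ge> t}"
  have meas: "E \<in> sets M"
  proof -
    have "f \<in> borel_measurable M" using f by (simp add: bnn_funs_def)
    then show ?thesis unfolding E_def by measurable
  qed
  have "A t E f \<ge> ennreal t"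
  proof (cases "E = {}")
    case True
    then show ?thesis using fam f t unfolding is_param_CAO_family_def by simp
  next
    case False
    have "t \<le> (INF x\<in>E. f x)"
      by (rule cINF_greatest[OF False]) (auto simp: E_def)
    hence "ennreal t \<le> ennreal (INF x\<in>E. f x)" by (rule ennreal_leI)
    also have "\<dots> \<le> A t E f" using inf_le[OF f t meas False] .
    finally show ?thesis .
  qed
  then have "\<mu> t E \<le> gen_level_measure M \<mu> A f t"
    unfolding gen_level_measure_def using meas by (intro SUP_upper) auto
  then show "\<mu> t {x\<in>space M. f x \<ge> t} \<le> gen_level_measure M \<mu> A f t"
    by (simp add: E_def)
qed

end
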